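(* Let $v=(v_l,v_h)$ be a valuation profile, let $\alpha\in(0,1)$, and let $p\in\{c_l,c_l+1,\dots,c_h\}$. Then the $\alpha$-auction game with valuations $v$ has a Nash equilibrium $\sigma$ with $\pi_l(\sigma)=c_l+(p-c_l)$ and $\pi_h(\sigma)=c_h+(c_h-p)$, and there is a sequence $\{\sigma^\lambda\}_{\lambda\in\mathbb{N}}$ of mixed-strategy profiles, each with full support on $\mathcal{B}$ for both agents and each weakly payoff-monotone for this game, such that $\sigma^\lambda\to\sigma$.
   Context: Two agents $l,h$ jointly own an indivisible good. Agent $i\in\{l,h\}$ has valuation $v_i$; valuations are even nonnegative integers bounded by a maximum valuation $\overline{v}$, with $v_l<v_h$. Agent $i$'s utility from receiving the object and paying $p$ to the other agent is $v_i-p$; from not receiving the object and receiving transfer $p$ it is $p$; agents are expected-utility maximizers. Net valuations are $c_i\equiv v_i/2$. The bid set is $\mathcal{B}=\{0,1,\dots,\overline{p}\}$ with $\overline{p}$ an integer, $\overline{p}\geq\overline{v}/2$. For $\alpha\in[0,1]$, the $\alpha$-auction (with tie-breaker favoring $h$) is: each agent simultaneously chooses a bid in $\mathcal{B}$; the agent with the strictly higher bid receives the object, and in case of a tie agent $h$ receives the object; the agent receiving the object pays $\alpha\cdot(\text{winner's bid})+(1-\alpha)\cdot(\text{loser's bid})$ to the other agent. A mixed strategy of agent $i$ is $\sigma_i\in\Delta(\mathcal{B})$, and $\pi_i(\sigma)$ is agent $i$'s expected utility under profile $\sigma$. A Nash equilibrium is a profile in which each agent's strategy puts positive probability only on bids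 maximizing her expected utility given the other agent's strategy. A profile $\sigma$ is weakly payoff-monotone for the game if for each agent $i$ and each pair of bids $b,d\in\mathcal{B}$, $\sigma_i(b)>\sigma_i(d)$ implies that the expected utility of bid $b$ for agent $i$ against $\sigma_{-i}$ is strictly greater than that of bid $d$. Convergence is pointwise convergence of probability vectors. *)

theory Defs
  imports "HOL-Analysis.Analysis"
begin

datatype agent = L | H

type_synonym profile = "agent \<Rightarrow> nat \<Rightarrow> real"

definition bids :: "nat \<Rightarrow> nat set" where
  "bids pbar = {0..pbar}"

definition other :: "agent \<Rightarrow> agent" where
  "other i = (if i = L then H else L)"

definition payment :: "real \<Rightarrow> nat \<Rightarrow> nat \<Rightarrow> real" where
  "payment \<alpha> w los = \<alpha> * real w + (1 - \<alpha>) * real los"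

text \<open>Utility of agent i bidding b when the other agent bids d (tie favours H).\<close>
definition util :: "real \<Rightarrow> (agent \<Rightarrow> nat) \<Rightarrow> agent \<Rightarrow> nat \<Rightarrow> nat \<Rightarrow> real" where
  "util \<alpha> v i b d =
     (if i = H then
        (if d \<le> b then real (v H) - payment \<alpha> b d else payment \<alpha> d b)
      else
        (if d < b then real (v L) - payment \<alpha> b d else payment \<alpha> d b))"

definition is_mixed :: "nat \<Rightarrow> (nat \<Rightarrow> real) \<Rightarrow> bool" where
  "is_mixed pbar s \<longleftrightarrow> (\<forall>b. 0 \<le> s b) \<and> (\<forall>b. b \<notin> bids pbar \<longrightarrow> s b = 0)
      \<and> (\<Sum>b\<in>bids pbar. s b) = 1"

definition is_profile :: "nat \<Rightarrow> profile \<Rightarrow> bool" where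
  "is_profile pbar \<sigma> \<longleftrightarrow> (\<forall>i. is_mixed pbar (\<sigma> i))"

definition bid_util :: "nat \<Rightarrow> real \<Rightarrow> (agent \<Rightarrow> nat) \<Rightarrow> profile \<Rightarrow> agent \<Rightarrow> nat \<Rightarrow> real" where
  "bid_util pbar \<alpha> v \<sigma> i b = (\<Sum>d\<in>bids pbar. \<sigma> (other i) d * util \<alpha> v i b d)"

definition exp_util :: "nat \<Rightarrow> real \<Rightarrow> (agent \<Rightarrow> nat) \<Rightarrow> profile \<Rightarrow> agent \<Rightarrow> real" where
  "exp_util pbar \<alpha> v \<sigma> i = (\<Sum>b\<in>bids pbar. \<sigma> i b * bid_util pbar \<alpha> v \<sigma> i b)"

definition nash_eq :: "nat \<Rightarrow> real \<Rightarrow> (agent \<Rightarrow> nat) \<Rightarrow> profile \<Rightarrow> bool" where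
  "nash_eq pbar \<alpha> v \<sigma> \<longleftrightarrow> is_profile pbar \<sigma> \<and>
     (\<forall>i. \<forall>b\<in>bids pbar. \<sigma> i b > 0 \<longrightarrow>
        (\<forall>d\<in>bids pbar. bid_util pbar \<alpha> v \<sigma> i d \<le> bid_util pbar \<alpha> v \<sigma> i b))"

definition full_support :: "nat \<Rightarrow> profile \<Rightarrow> bool" where
  "full_support pbar \<sigma> \<longleftrightarrow> (\<forall>i. \<forall>b\<in>bids pbar. \<sigma> i b > 0)"

definition weakly_payoff_monotone :: "nat \<Rightarrow> real \<Rightarrow> (agent \<Rightarrow> nat) \<Rightarrow> profile \<Rightarrow> bool" where
  "weakly_payoff_monotone pbar \<alpha> v \<sigma> \<longleftrightarrow>
     (\<forall>i. \<forall>b\<in>bids pbar. \<forall>d\<in>bids pbar. \<sigma> i b > \<sigma> i d \<longrightarrow>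
        bid_util pbar \<alpha> v \<sigma> i b > bid_util pbar \<alpha> v \<sigma> i d)"

definition valid_setting :: "nat \<Rightarrow> nat \<Rightarrow> (agent \<Rightarrow> nat) \<Rightarrow> bool" where
  "valid_setting vbar pbar v \<longleftrightarrow> even (v L) \<and> even (v H) \<and> v L < v H \<and>
     v L \<le> vbar \<and> v H \<le> vbar \<and> vbar \<le> 2 * pbar"

end

theory Submission
  imports Defs
begin

definition pert :: "nat \<Rightarrow> nat \<Rightarrow> real \<Rightarrow> profile" where
  "pert pbar p e = (\<lambda>i b. if b \<in> bids pbar then (1-e)*(if b = p then 1 else 0) + e / real (pbar+1) else 0)"

lemma card_bids: "card (bids pbar) = pbar + 1" by (simp add: bids_def)
lemma fin_bids: "finite (bids pbar)" by (simp add: bids_def)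

lemma sum_ind:
  assumes "p \<in> bids pbar"
  shows "(\<Sum>d\<in>bids pbar. (if d = p then 1 else 0) * (g d::real)) = g p"
proof -
  have "(\<Sum>d\<in>bids pbar. (if d = p then 1 else 0) * (g d::real)) = (\<Sum>d\<in>bids pbar. if d = p then g d else 0)"
    by (intro sum.cong) auto
  also have "\<dots> = g p" using assms fin_bids by (simp add: sum.delta)
  finally show ?thesis .
qed

lemma bu_pert:
  assumes "p \<in> bids pbar"
  shows "bid_util pbar \<alpha> v (pert pbar p e) i b =
     (1-e)*util \<alpha> v i b p + e / real (pbar+1) * (\<Sum>d\<in>bids pbar. util \<alpha> v i b d)"
proof -
  have "bid_util pbar \<alpha> v (pert pbar p e) i b =
    (\<Sum>d\<in>bids pbar. (1-e)*((if d = p then 1 else 0) * util \<alpha> v i b d) + e / real (pbar+1) * util \<alpha> v i b d)"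
    unfolding bid_util_def pert_def by (intro sum.cong) (auto simp: algebra_simps)
  also have "\<dots> = (1-e)*(\<Sum>d\<in>bids pbar. (if d = p then 1 else 0) * util \<alpha> v i b d)
     + e / real (pbar+1) * (\<Sum>d\<in>bids pbar. util \<alpha> v i b d)"
    by (simp add: sum.distrib sum_distrib_left)
  also have "(\<Sum>d\<in>bids pbar. (if d = p then 1 else 0) * util \<alpha> v i b d) = util \<alpha> v i b p"
    using sum_ind[OF assms] .
  finally show ?thesis .
qed

lemma pert_profile:
  assumes "0 \<le> e" "e \<le> 1" "p \<in> bids pbar"
  shows "is_profile pbar (pert pbar p e)"
proof -
  have "(\<Sum>b\<in>bids pbar. pert pbar p e i b) = 1" for i
  proof -
    have "(\<Sum>b\<in>bids pbar. pert pbar p e i b) =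
      (\<Sum>b\<in>bids pbar. (1-e)*(if b = p then 1 else 0) + e / real (pbar+1))"
      unfolding pert_def by (intro sum.cong) auto
    also have "\<dots> = (1-e) * (\<Sum>b\<in>bids pbar. (if b = p then 1 else 0)) + e"
      using card_bids[of pbar] by (simp add: sum.distrib sum_distrib_left[symmetric])
    also have "(\<Sum>b\<in>bids pbar. (if b = p then 1 else (0::real))) = 1"
      using assms fin_bids by (simp add: sum.delta)
    finally show ?thesis by simp
  qed
  moreover have "0 \<le> pert pbar p e i b" for i b
    using assms unfolding pert_def by auto
  ultimately show ?thesis unfolding is_profile_def is_mixed_def pert_def by auto
qed

lemma gap:
  assumes "valid_setting vbar pbar v" "0 < \<alpha>" "\<alpha> < 1"
    "v L div 2 \<le> p" "p \<le> v H div 2" "d \<noteq> p"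
  shows "util \<alpha> v i d p < util \<alpha> v i p p"
proof -
  have vl: "real (v L) \<le> 2 * real p" and vh: "2 * real p \<le> real (v H)"
    using assms unfolding valid_setting_def by (auto elim!: evenE)
  have "real d < real p \<or> real d > real p" using assms(6) by linarith
  then show ?thesis
  proof
    assume dl: "real d < real p"
    then have "d < p" by simp
    have "\<alpha> * p + (1-\<alpha>) * d < \<alpha> * p + (1-\<alpha>) * p"
      using dl assms(3) by (intro add_strict_left_mono mult_strict_left_mono) auto
    then show ?thesis using \<open>d < p\<close> vh
      by (cases i) (auto simp: util_def payment_def algebra_simps)
  next
    assume dg: "real d > real p"
    then have "p < d" by simp
    have "\<alpha> * p < \<alpha> * d" using dg assms(2) by simp
    then show ?thesis using \<open>p < d\<close> vl
      by (cases i) (auto simp: util_def payment_def algebra_simps)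
  qed
qed

theorem mainTheorem4:
  fixes vbar pbar p :: nat and v :: "agent \<Rightarrow> nat" and \<alpha> :: real
  assumes "valid_setting vbar pbar v"
    and "0 < \<alpha>" and "\<alpha> < 1"
    and "v L div 2 \<le> p" and "p \<le> v H div 2"
  shows "\<exists>\<sigma>. nash_eq pbar \<alpha> v \<sigma>
      \<and> exp_util pbar \<alpha> v \<sigma> L = real (v L div 2) + (real p - real (v L div 2))
      \<and> exp_util pbar \<alpha> v \<sigma> H = real (v H div 2) + (real (v H div 2) - real p)
      \<and> (\<exists>s :: nat \<Rightarrow> profile.
            (\<forall>n. is_profile pbar (s n) \<and> full_support pbar (s n)
                  \<and> weakly_payoff_monotone pbar \<alpha> v (s n))
          \<and> (\<forall>i b. (\<lambda>n. s n i b) \<longlonglongrightarrow> \<sigma> i b))"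
proof -
  have pb: "p \<in> bids pbar" using assms(1,5) unfolding valid_setting_def bids_def by auto
  define \<sigma> where "\<sigma> = pert pbar p 0"
  have bu0: "bid_util pbar \<alpha> v \<sigma> i b = util \<alpha> v i b p" for i b
    unfolding \<sigma>_def using bu_pert[OF pb] by simp
  have sig: "\<sigma> i b = (if b = p then 1 else 0)" for i b
    unfolding \<sigma>_def pert_def using pb by auto
  have le: "util \<alpha> v i d p \<le> util \<alpha> v i p p" for i d
    using gap[OF assms, of d i] by (cases "d = p") auto
  have nash: "nash_eq pbar \<alpha> v \<sigma>"
    unfolding nash_eq_def using pert_profile[OF _ _ pb, of 0] le
    by (auto simp: \<sigma>_def[symmetric] bu0 sig)
  have eu: "exp_util pbar \<alpha> v \<sigma> i = util \<alpha> v i p p" for i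
    unfolding exp_util_def bu0 sig using sum_ind[OF pb] .
  have vL: "exp_util pbar \<alpha> v \<sigma> L = real (v L div 2) + (real p - real (v L div 2))"
    unfolding eu by (simp add: util_def payment_def algebra_simps)
  have vH: "exp_util pbar \<alpha> v \<sigma> H = real (v H div 2) + (real (v H div 2) - real p)"
  proof -
    have "real (v H div 2) * 2 = real (v H)" using assms(1) unfolding valid_setting_def
      by (auto elim!: evenE)
    then show ?thesis unfolding eu by (simp add: util_def payment_def algebra_simps)
  qed
  define e where "e = (\<lambda>n::nat. 1 / (2 + real n))"
  have e0: "e \<longlonglongrightarrow> 0" unfolding e_def
    by (rule tendsto_divide_0[OF tendsto_const]) (rule filterlim_at_top_imp_at_infinity, rule filterlim_tendsto_add_at_top[OF tendsto_const filterlim_real_sequentially])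
  have epos: "0 < e n" "e n < 1" for n unfolding e_def by auto
  define f where "f = (\<lambda>i d x. bid_util pbar \<alpha> v (pert pbar p x) i p - bid_util pbar \<alpha> v (pert pbar p x) i d)"
  have nz: "real (pbar + 1) \<noteq> 0" by (simp only: of_nat_eq_0_iff)
  have ev1: "eventually (\<lambda>n. f i d (e n) > 0) sequentially" if "d \<noteq> p" for i d
  proof -
    have "(\<lambda>n. f i d (e n)) \<longlonglongrightarrow> f i d 0"
      unfolding f_def bu_pert[OF pb] using nz by (intro tendsto_intros e0)
    moreover have "f i d 0 > 0" unfolding f_def bu_pert[OF pb] using gap[OF assms that] by simp
    ultimately show ?thesis by (rule order_tendstoD)
  qed
  have "eventually (\<lambda>n. \<forall>i\<in>{L,H}. \<forall>d\<in>bids pbar - {p}. f i d (e n) > 0) sequentially"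
    using ev1 by (intro eventually_ball_finite ballI) (auto simp: fin_bids)
  then obtain N0 where N00: "\<forall>n\<ge>N0. \<forall>i\<in>{L,H}. \<forall>d\<in>bids pbar - {p}. f i d (e n) > 0"
    unfolding eventually_sequentially by blast
  have N0: "f i d (e n) > 0" if "n \<ge> N0" "d \<in> bids pbar" "d \<noteq> p" for n i d
  proof -
    have "i \<in> {L,H}" by (cases i) auto
    then show ?thesis using N00 that by blast
  qed
  define s where "s = (\<lambda>n. pert pbar p (e (n + N0)))"
  have "\<forall>n. is_profile pbar (s n) \<and> full_support pbar (s n) \<and> weakly_payoff_monotone pbar \<alpha> v (s n)"
  proof
    fix n
    have prof: "is_profile pbar (s n)" unfolding s_def
      using pert_profile[OF _ _ pb] epos[of "n+N0"] by auto
    have fs: "full_support pbar (s n)" unfolding s_def full_support_def pert_def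
      using epos[of "n+N0"] by (auto intro: add_nonneg_pos)
    have wpm: "weakly_payoff_monotone pbar \<alpha> v (s n)"
      unfolding weakly_payoff_monotone_def
    proof (intro allI ballI impI)
      fix i b d assume b: "b \<in> bids pbar" and d: "d \<in> bids pbar" and lt: "s n i d < s n i b"
      have "b = p \<and> d \<noteq> p" using lt b d epos[of "n+N0"] unfolding s_def pert_def
        by (auto split: if_splits)
      then show "bid_util pbar \<alpha> v (s n) i d < bid_util pbar \<alpha> v (s n) i b"
        using N0[of "n+N0" d i] d unfolding f_def s_def by auto
    qed
    show "is_profile pbar (s n) \<and> full_support pbar (s n) \<and> weakly_payoff_monotone pbar \<alpha> v (s n)"
      using prof fs wpm by blast
  qed
  moreover have "\<forall>i b. (\<lambda>n. s n i b) \<longlonglongrightarrow> \<sigma> i b"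
  proof (intro allI)
    fix i b
    have e1: "(\<lambda>n. e (n + N0)) \<longlonglongrightarrow> 0" using LIMSEQ_ignore_initial_segment[OF e0] .
    show "(\<lambda>n. s n i b) \<longlonglongrightarrow> \<sigma> i b"
      unfolding s_def \<sigma>_def pert_def
      by (cases "b \<in> bids pbar") (auto intro!: tendsto_eq_intros e1)
  qed
  ultimately show ?thesis using nash vL vH by blast
qed

end
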